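(* Consider the ODE system $$\frac{du}{dt}=\frac{a_1u}{1+fv}-b_1u^2-c_1uv,\qquad \frac{dv}{dt}=a_2v-b_2v^2-c_2uv,$$ with positive parameters $a_1,a_2,b_1,b_2,c_1,c_2$. For every value of $f\ge0$, the system has no periodic orbits in the nonnegative quadrant $\{u\ge0,v\ge0\}$.
   Context: The state space is the biologically feasible nonnegative quadrant of population densities. *)

theory Defs
  imports "HOL-Analysis.Analysis"
begin

definition Fu :: "real \<Rightarrow> real \<Rightarrow> real \<Rightarrow> real \<Rightarrow> real \<Rightarrow> real \<Rightarrow> real" where
  "Fu a1 b1 c1 f u v = a1 * u / (1 + f * v) - b1 * u^2 - c1 * u * v"

definition Fv :: "real \<Rightarrow> real \<Rightarrow> real \<Rightarrow> real \<Rightarrow> real \<Rightarrow> real" where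
  "Fv a2 b2 c2 u v = a2 * v - b2 * v^2 - c2 * u * v"

definition is_solution ::
  "real \<Rightarrow> real \<Rightarrow> real \<Rightarrow> real \<Rightarrow> real \<Rightarrow> real \<Rightarrow> real \<Rightarrow> (real \<Rightarrow> real) \<Rightarrow> (real \<Rightarrow> real) \<Rightarrow> bool" where
  "is_solution a1 a2 b1 b2 c1 c2 f u v \<longleftrightarrow>
     (\<forall>t. (u has_real_derivative Fu a1 b1 c1 f (u t) (v t)) (at t) \<and>
          (v has_real_derivative Fv a2 b2 c2 (u t) (v t)) (at t))"

definition periodic_orbit ::
  "real \<Rightarrow> real \<Rightarrow> real \<Rightarrow> real \<Rightarrow> real \<Rightarrow> real \<Rightarrow> real \<Rightarrow> (real \<Rightarrow> real) \<Rightarrow> (real \<Rightarrow> real) \<Rightarrow> bool" where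
  "periodic_orbit a1 a2 b1 b2 c1 c2 f u v \<longleftrightarrow>
     is_solution a1 a2 b1 b2 c1 c2 f u v \<and>
     (\<exists>T>0. \<forall>t. u (t + T) = u t \<and> v (t + T) = v t) \<and>
     (\<exists>t. (u t, v t) \<noteq> (u 0, v 0))"

end

theory Submission
  imports Defs
begin

lemma periodic_shift:
  fixes w :: "real \<Rightarrow> real"
  assumes T: "T > 0" and per: "\<forall>t. w (t + T) = w t"
  shows "\<exists>s. a \<le> s \<and> s \<le> a + T \<and> w t = w s"
proof -
  have n: "w (r + real n * T) = w r" for r n
  proof (induction n)
    case 0 then show ?case by simp
  next
    case (Suc n)
    have "w (r + real (Suc n) * T) = w ((r + real n * T) + T)" by (simp add: algebra_simps)
    also have "\<dots> = w r" using per Suc by simp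
    finally show ?case .
  qed
  define k where "k = floor ((t - a)/T)"
  define s where "s = t - of_int k * T"
  have k1: "of_int k \<le> (t - a)/T" and k2: "(t - a)/T < of_int k + 1"
    unfolding k_def by linarith+
  have "of_int k * T \<le> t - a" using k1 T by (simp add: pos_le_divide_eq)
  moreover have "t - a < (of_int k + 1) * T" using k2 T by (simp add: pos_divide_less_eq)
  ultimately have "a \<le> s" "s \<le> a + T" unfolding s_def by (auto simp: algebra_simps)
  moreover have "w t = w s"
  proof (cases "k \<ge> 0")
    case True
    then have "t = s + real (nat k) * T" unfolding s_def by simp
    then show ?thesis using n by metis
  next
    case False
    then have "s = t + real (nat (-k)) * T" unfolding s_def by simp
    then show ?thesis using n by metis
  qed
  ultimately show ?thesis by blast
qed

lemma zero_prop:
  fixes w w' k :: "real \<Rightarrow> real"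
  assumes T: "T > 0" and per: "\<forall>t. w (t+T) = w t"
  and d: "\<forall>t. (w has_real_derivative w' t) (at t)"
  and kc: "\<forall>t. isCont k t"
  and b: "\<forall>t. \<bar>w' t\<bar> \<le> k t * \<bar>w t\<bar>"
  and z: "w t0 = 0"
  shows "w t = 0"
proof -
  have kco: "continuous_on {t0..t0+T} k" using kc by (simp add: continuous_at_imp_continuous_on)
  obtain m where m: "m \<in> {t0..t0+T}" "\<forall>y\<in>{t0..t0+T}. k y \<le> k m"
    using continuous_attains_sup[OF compact_Icc _ kco] T by auto
  define K where "K = k m"
  define \<phi> where "\<phi> = (\<lambda>t. (w t)^2 * exp (-2* K* t))"
  have le: "\<phi> r \<le> \<phi> t0" if r: "t0 \<le> r" "r \<le> t0 + T" for r
  proof (rule DERIV_nonpos_imp_nonincreasing[OF r(1)])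
    fix y assume y: "t0 \<le> y" "y \<le> r"
    have D: "(\<phi> has_real_derivative (2 * w y * w' y * exp(-2* K* y) + (w y)^2 * (exp(-2* K* y) * (-2* K)))) (at y)"
      unfolding \<phi>_def
      by (rule derivative_eq_intros d[rule_format] refl | simp)+
    have "w y * w' y \<le> \<bar>w y\<bar> * \<bar>w' y\<bar>" by (metis abs_ge_self abs_mult)
    also have "\<dots> \<le> \<bar>w y\<bar> * (k y * \<bar>w y\<bar>)" using b by (simp add: mult_left_mono)
    also have "\<dots> = k y * (w y)^2" by (simp add: power2_eq_square abs_mult_self_eq)
    also have "\<dots> \<le> K * (w y)^2" using m y r unfolding K_def by (simp add: mult_right_mono)
    finally have "w y * w' y \<le> K * (w y)^2" .
    then have "2 * w y * w' y * exp(-2* K* y) + (w y)^2 * (exp(-2* K* y) * (-2* K)) \<le> 0"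
    proof -
      assume h: "w y * w' y \<le> K * (w y)^2"
      have "2 * w y * w' y * exp(-2* K* y) + (w y)^2 * (exp(-2* K* y) * (-2* K))
          = 2 * exp(-2* K* y) * (w y * w' y - K * (w y)^2)" by (simp add: algebra_simps)
      also have "\<dots> \<le> 0" using h by (simp add: mult_nonneg_nonpos)
      finally show ?thesis .
    qed
    then show "\<exists>y'. (\<phi> has_real_derivative y') (at y) \<and> y' \<le> 0" using D by blast
  qed
  have zero: "w r = 0" if r: "t0 \<le> r" "r \<le> t0 + T" for r
  proof -
    have "\<phi> r \<le> 0" using le[OF r] z unfolding \<phi>_def by simp
    moreover have "\<phi> r \<ge> 0" unfolding \<phi>_def by simp
    ultimately have "\<phi> r = 0" by linarith
    then have "(w r)^2 * exp (-2* K* r) = 0" unfolding \<phi>_def by simp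
    then show ?thesis by simp
  qed
  obtain s where "t0 \<le> s" "s \<le> t0 + T" "w t = w s" using periodic_shift[OF T per] by blast
  then show ?thesis using zero by simp
qed

lemma inv_cone:
  fixes x y A B C D :: "real \<Rightarrow> real"
  assumes dx: "\<forall>t. (x has_real_derivative (A t * x t + B t * y t)) (at t)"
  and dy: "\<forall>t. (y has_real_derivative (C t * x t + D t * y t)) (at t)"
  and B: "\<forall>t. B t < 0" and C: "\<forall>t. C t < 0" and nz: "\<forall>t. \<not>(x t = 0 \<and> y t = 0)"
  and xs: "x s > 0" and ys: "y s < 0" and st: "s \<le> t"
  shows "x t > 0 \<and> y t < 0"
proof (rule ccontr)
  assume nt: "\<not> (x t > 0 \<and> y t < 0)"
  have cx: "continuous_on A' x" for A' using dx
    by (meson DERIV_isCont continuous_at_imp_continuous_on)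
  have cy: "continuous_on A' y" for A' using dy
    by (meson DERIV_isCont continuous_at_imp_continuous_on)
  define S where "S = {r. s \<le> r} \<inter> ({r. x r \<le> 0} \<union> {r. 0 \<le> y r})"
  have tS: "t \<in> S" using st nt unfolding S_def by auto
  have clS: "closed S" unfolding S_def
    using cx cy by (intro closed_Int closed_Un closed_Collect_le) (auto intro: continuous_intros)
  have bS: "bdd_below S" unfolding S_def by (auto intro: bdd_belowI)
  define t1 where "t1 = Inf S"
  have t1S: "t1 \<in> S" unfolding t1_def using closed_contains_Inf[OF _ bS clS] tS by auto
  have low: "r \<notin> S" if "r < t1" for r using cInf_lower[OF _ bS] that unfolding t1_def by force
  have st1: "s \<le> t1" using t1S unfolding S_def by auto
  have sS: "s \<notin> S" using xs ys unfolding S_def by auto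
  then have st1': "s < t1" using st1 t1S by (cases "s = t1") auto
  have before: "x r > 0 \<and> y r < 0" if "s \<le> r" "r < t1" for r
    using low[OF that(2)] that(1) unfolding S_def by auto
  have x1: "x t1 \<ge> 0"
  proof (rule ccontr)
    assume "\<not> x t1 \<ge> 0"
    then obtain r where "r \<ge> s" "r \<le> t1" "x r = 0"
      using IVT2'[of x t1 0 s] xs st1 cx by force
    then show False using before[of r] \<open>\<not> x t1 \<ge> 0\<close> by (cases "r = t1") auto
  qed
  have y1: "y t1 \<le> 0"
  proof (rule ccontr)
    assume "\<not> y t1 \<le> 0"
    then obtain r where "r \<ge> s" "r \<le> t1" "y r = 0"
      using IVT'[of y s 0 t1] ys st1 cy by force
    then show False using before[of r] \<open>\<not> y t1 \<le> 0\<close> by (cases "r = t1") auto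
  qed
  have "x t1 = 0 \<or> y t1 = 0" using t1S x1 y1 unfolding S_def by auto
  then show False
  proof
    assume x0: "x t1 = 0"
    then have y0: "y t1 < 0" using nz y1 by force
    have "A t1 * x t1 + B t1 * y t1 > 0" using x0 y0 B by (simp add: mult_neg_neg)
    then obtain d where d: "d > 0" "\<forall>h>0. h < d \<longrightarrow> x (t1 - h) < x t1"
      using DERIV_pos_inc_left dx by blast
    obtain h where h1: "h > 0" "h < d" "h < t1 - s" using field_lbound_gt_zero[of d "t1 - s"] d st1' by auto
    then have "h > 0" "h < d" "s \<le> t1 - h" "t1 - h < t1" by linarith+
    then show False using d before[of "t1 - h"] x0 by force
  next
    assume y0: "y t1 = 0"
    then have x0: "x t1 > 0" using nz x1 by force
    have "C t1 * x t1 + D t1 * y t1 < 0" using x0 y0 C by (simp add: mult_neg_pos)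
    then obtain d where d: "d > 0" "\<forall>h>0. h < d \<longrightarrow> y t1 < y (t1 - h)"
      using DERIV_neg_dec_left dy by blast
    obtain h where h1: "h > 0" "h < d" "h < t1 - s" using field_lbound_gt_zero[of d "t1 - s"] d st1' by auto
    then have "h > 0" "h < d" "s \<le> t1 - h" "t1 - h < t1" by linarith+
    then show False using d before[of "t1 - h"] y0 by force
  qed
qed

lemma quad_bound: fixes x y A B C D :: real
  shows "\<bar>2* x*(A* x+B* y) + 2* y*(C* x+D* y)\<bar> \<le> 2*(\<bar>A\<bar> + \<bar>B+C\<bar> + \<bar>D\<bar>) * \<bar>x^2+y^2\<bar>"
proof -
  have e: "2* x*(A* x+B* y) + 2* y*(C* x+D* y) = 2*(A* x^2 + (B+C)*(x* y) + D* y^2)" by (simp add: algebra_simps power2_eq_square)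
  have sq: "x^2 + y^2 - \<bar>x* y\<bar> = (\<bar>x\<bar> - \<bar>y\<bar>)^2 + \<bar>x\<bar>* \<bar>y\<bar>"
    by (simp add: power2_eq_square algebra_simps abs_mult abs_mult_self_eq)
  have "(\<bar>x\<bar> - \<bar>y\<bar>)^2 + \<bar>x\<bar>* \<bar>y\<bar> \<ge> 0" by simp
  then have xy: "\<bar>x* y\<bar> \<le> x^2+y^2" using sq by linarith
  have t: "\<bar>a + b + c\<bar> \<le> \<bar>a\<bar> + \<bar>b\<bar> + \<bar>c\<bar>" for a b c :: real by linarith
  have "\<bar>A* x^2 + (B+C)*(x* y) + D* y^2\<bar> \<le> \<bar>A* x^2\<bar> + \<bar>(B+C)*(x* y)\<bar> + \<bar>D* y^2\<bar>" by (rule t)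
  also have "\<dots> = \<bar>A\<bar>* x^2 + \<bar>B+C\<bar>* \<bar>x* y\<bar> + \<bar>D\<bar>* y^2" by (simp add: abs_mult)
  also have "\<dots> \<le> \<bar>A\<bar>*(x^2+y^2) + \<bar>B+C\<bar>*(x^2+y^2) + \<bar>D\<bar>*(x^2+y^2)"
    by (intro add_mono mult_left_mono xy) auto
  finally have f0: "\<bar>A* x^2 + (B+C)*(x* y) + D* y^2\<bar> \<le> (\<bar>A\<bar> + \<bar>B+C\<bar> + \<bar>D\<bar>) * (x^2+y^2)" by (simp add: algebra_simps)
  have r: "2 * \<bar>A* x^2 + (B+C)*(x* y) + D* y^2\<bar> \<le> 2*(\<bar>A\<bar> + \<bar>B+C\<bar> + \<bar>D\<bar>) * (x^2+y^2)" by (metis mult.assoc mult_left_mono[OF f0] zero_le_numeral)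
  have a1: "\<bar>2*(A* x^2 + (B+C)*(x* y) + D* y^2)\<bar> = 2 * \<bar>A* x^2 + (B+C)*(x* y) + D* y^2\<bar>" by (simp only: abs_mult abs_numeral)
  have a2: "\<bar>x^2+y^2\<bar> = x^2+y^2" by simp
  show ?thesis unfolding e a1 a2 using r .
qed
lemma auxu: fixes q U V X Y a1 b1 c1 f :: real assumes "q \<noteq> 0" shows "((0*U + X*a1)*q - a1*U*(0+(0*V+Y*f)))/(q*q) - (0*U^2 + real 2*(X*U^(2-Suc 0))*b1) - ((0*U + X*c1)*V + Y*(c1*U)) = (a1/q - 2*b1*U - c1*V)*X + (-(a1*f*U/q^2) - c1*U)*Y"
  using assms by (simp add: field_simps power2_eq_square)

theorem mainTheorem10:
  fixes a1 a2 b1 b2 c1 c2 f :: real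
  assumes "a1 > 0" "a2 > 0" "b1 > 0" "b2 > 0" "c1 > 0" "c2 > 0" "f \<ge> 0"
  shows "\<not> (\<exists>u v. periodic_orbit a1 a2 b1 b2 c1 c2 f u v \<and> (\<forall>t. u t \<ge> 0 \<and> v t \<ge> 0))"
proof
  assume "\<exists>u v. periodic_orbit a1 a2 b1 b2 c1 c2 f u v \<and> (\<forall>t. u t \<ge> 0 \<and> v t \<ge> 0)"
  then obtain u v T t9 where sol: "is_solution a1 a2 b1 b2 c1 c2 f u v"
    and T: "T > 0" and per: "\<forall>t. u (t + T) = u t \<and> v (t + T) = v t"
    and nc: "(u t9, v t9) \<noteq> (u 0, v 0)" and nn: "\<forall>t. u t \<ge> 0 \<and> v t \<ge> 0"
    unfolding periodic_orbit_def by blast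
  define x where "x = (\<lambda>t. Fu a1 b1 c1 f (u t) (v t))"
  define y where "y = (\<lambda>t. Fv a2 b2 c2 (u t) (v t))"
  have du: "\<forall>t. (u has_real_derivative x t) (at t)" using sol unfolding is_solution_def x_def by blast
  have dv: "\<forall>t. (v has_real_derivative y t) (at t)" using sol unfolding is_solution_def y_def by blast
  have cu: "isCont u t" for t using du DERIV_isCont by blast
  have cv: "isCont v t" for t using dv DERIV_isCont by blast
  have pos: "1 + f * v t > 0" for t using nn assms(7) by (simp add: add_pos_nonneg)
  then have pos': "1 + f * v t \<noteq> 0" for t by (metis less_irrefl)
  define A where "A = (\<lambda>t. a1/(1+f* v t) - 2* b1* u t - c1* v t)"
  define B where "B = (\<lambda>t. -(a1* f* u t/(1+f* v t)^2) - c1* u t)"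
  define C where "C = (\<lambda>t. -(c2 * v t))"
  define D where "D = (\<lambda>t. a2 - 2* b2* v t - c2* u t)"
  have cA: "isCont A t" for t unfolding A_def using pos' by (intro continuous_intros cu cv) auto
  have cB: "isCont B t" for t unfolding B_def using pos' by (intro continuous_intros cu cv) auto
  have cC: "isCont C t" for t unfolding C_def by (intro continuous_intros cu cv)
  have cD: "isCont D t" for t unfolding D_def by (intro continuous_intros cu cv)
  have dx: "\<forall>t. (x has_real_derivative (A t * x t + B t * y t)) (at t)"
  proof
    fix t
    have "((\<lambda>t. a1 * u t / (1 + f * v t) - b1 * (u t)^2 - c1 * u t * v t) has_real_derivative (A t * x t + B t * y t)) (at t)"
      unfolding A_def B_def
      apply (rule derivative_eq_intros du[rule_format] dv[rule_format] refl | rule pos')+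
      by (rule auxu[OF pos'])
    then show "(x has_real_derivative (A t * x t + B t * y t)) (at t)"
      unfolding x_def Fu_def .
  qed
  have dy: "\<forall>t. (y has_real_derivative (C t * x t + D t * y t)) (at t)"
  proof
    fix t
    have "((\<lambda>t. a2 * v t - b2 * (v t)^2 - c2 * u t * v t) has_real_derivative (C t * x t + D t * y t)) (at t)"
      unfolding C_def D_def
      apply (rule derivative_eq_intros du[rule_format] dv[rule_format] refl)+
      by (simp add: algebra_simps)
    then show "(y has_real_derivative (C t * x t + D t * y t)) (at t)"
      unfolding y_def Fv_def .
  qed
  have perx: "\<forall>t. x (t + T) = x t" using per unfolding x_def by simp
  have pery: "\<forall>t. y (t + T) = y t" using per unfolding y_def by simp
  have cx: "isCont x t" for t using dx DERIV_isCont by blast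
  have cy: "isCont y t" for t using dy DERIV_isCont by blast
  have E: "\<forall>t. \<not> (x t = 0 \<and> y t = 0)"
  proof (rule ccontr)
    assume "\<not> (\<forall>t. \<not> (x t = 0 \<and> y t = 0))"
    then obtain t0 where t0: "x t0 = 0" "y t0 = 0" by blast
    define W where "W = (\<lambda>t. (x t)^2 + (y t)^2)"
    have W0: "W t = 0" for t
    proof -
      have z1: "\<forall>t. W (t + T) = W t" using perx pery unfolding W_def by simp
      have z2: "\<forall>t. (W has_real_derivative 2* x t*(A t* x t+B t* y t) + 2* y t*(C t* x t+D t* y t)) (at t)"
      proof
        fix t show "(W has_real_derivative 2* x t*(A t* x t+B t* y t) + 2* y t*(C t* x t+D t* y t)) (at t)"
          unfolding W_def
          by (rule derivative_eq_intros dx[rule_format] dy[rule_format] refl | simp)+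
      qed
      have z3: "\<forall>t. isCont (\<lambda>t. 2*(\<bar>A t\<bar> + \<bar>B t + C t\<bar> + \<bar>D t\<bar>)) t"
        using cA cB cC cD by (auto intro!: continuous_intros)
      have z4: "\<forall>t. \<bar>2* x t*(A t* x t+B t* y t) + 2* y t*(C t* x t+D t* y t)\<bar> \<le> 2*(\<bar>A t\<bar> + \<bar>B t + C t\<bar> + \<bar>D t\<bar>) * \<bar>W t\<bar>"
        unfolding W_def using quad_bound by blast
      have z5: "W t0 = 0" unfolding W_def using t0 by simp
      from zero_prop[OF T z1 z2 z3 z4 z5] show ?thesis .
    qed
    have x0: "x t = 0" for t using W0[of t] unfolding W_def by (simp add: add_nonneg_eq_0_iff)
    have y0: "y t = 0" for t using W0[of t] unfolding W_def by (simp add: add_nonneg_eq_0_iff)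
    have "u t9 = u 0" using DERIV_isconst_all[of u] du x0 by metis
    moreover have "v t9 = v 0" using DERIV_isconst_all[of v] dv y0 by metis
    ultimately show False using nc by simp
  qed
  obtain \<xi> where \<xi>: "0 < \<xi>" "\<xi> < T" "(u has_real_derivative 0) (at \<xi>)"
    using Rolle[of 0 T u] T per cu du
    by (metis add_0 continuous_at_imp_continuous_on real_differentiable_def)
  have x\<xi>: "x \<xi> = 0" using DERIV_unique \<xi>(3) du by blast
  obtain \<zeta> where \<zeta>: "0 < \<zeta>" "\<zeta> < T" "(v has_real_derivative 0) (at \<zeta>)"
    using Rolle[of 0 T v] T per cv dv
    by (metis add_0 continuous_at_imp_continuous_on real_differentiable_def)
  have y\<zeta>: "y \<zeta> = 0" using DERIV_unique \<zeta>(3) dv by blast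
  have upos: "u t > 0" for t
  proof (rule ccontr)
    assume "\<not> u t > 0"
    then have "u t = 0" using nn by (metis order.not_eq_order_implies_strict)
    have "u \<zeta> = 0"
    proof -
      have z1: "\<forall>t. u (t + T) = u t" using per by simp
      have z2: "\<forall>t. (u has_real_derivative x t) (at t)" using du .
      have z3: "\<forall>t. isCont (\<lambda>t. \<bar>a1/(1+f* v t) - b1* u t - c1* v t\<bar>) t"
        using pos' by (auto intro!: continuous_intros cu cv)
      have z4: "\<forall>t. \<bar>x t\<bar> \<le> \<bar>a1/(1+f* v t) - b1* u t - c1* v t\<bar> * \<bar>u t\<bar>"
      proof
        fix t
        have "x t = u t * (a1/(1+f* v t) - b1* u t - c1* v t)"
          unfolding x_def Fu_def by (simp add: algebra_simps power2_eq_square)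
        then show "\<bar>x t\<bar> \<le> \<bar>a1/(1+f* v t) - b1* u t - c1* v t\<bar> * \<bar>u t\<bar>" by (simp add: abs_mult)
      qed
      have z5: "u t = 0" by fact
      from zero_prop[OF T z1 z2 z3 z4 z5] show ?thesis .
    qed
    then have "x \<zeta> = 0" unfolding x_def Fu_def by simp
    then show False using E y\<zeta> by blast
  qed
  have vpos: "v t > 0" for t
  proof (rule ccontr)
    assume "\<not> v t > 0"
    then have "v t = 0" using nn by (metis order.not_eq_order_implies_strict)
    have "v \<xi> = 0"
    proof -
      have z1: "\<forall>t. v (t + T) = v t" using per by simp
      have z2: "\<forall>t. (v has_real_derivative y t) (at t)" using dv .
      have z3: "\<forall>t. isCont (\<lambda>t. \<bar>a2 - b2* v t - c2* u t\<bar>) t"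
        by (auto intro!: continuous_intros cu cv)
      have z4: "\<forall>t. \<bar>y t\<bar> \<le> \<bar>a2 - b2* v t - c2* u t\<bar> * \<bar>v t\<bar>"
      proof
        fix t
        have "y t = v t * (a2 - b2* v t - c2* u t)"
          unfolding y_def Fv_def by (simp add: algebra_simps power2_eq_square)
        then show "\<bar>y t\<bar> \<le> \<bar>a2 - b2* v t - c2* u t\<bar> * \<bar>v t\<bar>" by (simp add: abs_mult)
      qed
      have z5: "v t = 0" by fact
      from zero_prop[OF T z1 z2 z3 z4 z5] show ?thesis .
    qed
    then have "y \<xi> = 0" unfolding y_def Fv_def by simp
    then show False using E x\<xi> by blast
  qed
  have Bneg: "\<forall>t. B t < 0"
  proof
    fix t
    have "a1* f* u t/(1+f* v t)^2 \<ge> 0" using assms upos[of t] by simp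
    moreover have "c1 * u t > 0" using assms upos[of t] by simp
    ultimately show "B t < 0" unfolding B_def by linarith
  qed
  have Cneg: "\<forall>t. C t < 0" unfolding C_def using assms vpos by simp
  have y\<xi>: "y \<xi> \<noteq> 0" using E x\<xi> by blast
  show False
  proof (cases "y \<xi> > 0")
    case True
    have "A \<xi> * x \<xi> + B \<xi> * y \<xi> < 0" using x\<xi> True Bneg by (simp add: mult_neg_pos)
    then obtain d where d: "d > 0" "\<forall>h>0. h < d \<longrightarrow> x (\<xi> + h) < x \<xi>"
      using DERIV_neg_dec_right dx by blast
    obtain r where r: "r > 0" "\<forall>z. z \<noteq> \<xi> \<and> \<bar>\<xi> - z\<bar> < r \<longrightarrow> 0 < y z"
      using LIM_fun_gt_zero[OF cy[of \<xi>, unfolded isCont_def] True] by blast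
    obtain h where h: "h > 0" "h < d" "h < r" using field_lbound_gt_zero[of d r] d r by auto
    define s where "s = \<xi> + h"
    have xs: "- x s > 0" using d h x\<xi> unfolding s_def by force
    have ys: "- y s < 0" using r h unfolding s_def by force
    have dx': "\<forall>t. ((\<lambda>t. - x t) has_real_derivative (A t * (- x t) + B t * (- y t))) (at t)"
    proof
      fix t show "((\<lambda>t. - x t) has_real_derivative (A t * (- x t) + B t * (- y t))) (at t)"
        using DERIV_minus[OF dx[rule_format, of t]] by simp
    qed
    have dy': "\<forall>t. ((\<lambda>t. - y t) has_real_derivative (C t * (- x t) + D t * (- y t))) (at t)"
    proof
      fix t show "((\<lambda>t. - y t) has_real_derivative (C t * (- x t) + D t * (- y t))) (at t)"
        using DERIV_minus[OF dy[rule_format, of t]] by simp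
    qed
    have neg: "x t < 0" if "s \<le> t" for t
      using inv_cone[OF dx' dy' Bneg Cneg _ xs ys that] E by auto
    have "u (s + T) < u s"
      using DERIV_neg_imp_decreasing[of s "s + T" u] T du neg by force
    then show False using per by simp
  next
    case False
    then have yn: "y \<xi> < 0" using y\<xi> by simp
    have "A \<xi> * x \<xi> + B \<xi> * y \<xi> > 0" using x\<xi> yn Bneg by (simp add: mult_neg_neg)
    then obtain d where d: "d > 0" "\<forall>h>0. h < d \<longrightarrow> x \<xi> < x (\<xi> + h)"
      using DERIV_pos_inc_right dx by blast
    obtain r where r: "r > 0" "\<forall>z. z \<noteq> \<xi> \<and> \<bar>\<xi> - z\<bar> < r \<longrightarrow> y z < 0"
      using LIM_fun_less_zero[OF cy[of \<xi>, unfolded isCont_def] yn] by blast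
    obtain h where h: "h > 0" "h < d" "h < r" using field_lbound_gt_zero[of d r] d r by auto
    define s where "s = \<xi> + h"
    have xs: "x s > 0" using d h x\<xi> unfolding s_def by force
    have ys: "y s < 0" using r h unfolding s_def by force
    have posx: "x t > 0" if "s \<le> t" for t
      using inv_cone[OF dx dy Bneg Cneg E xs ys that] by auto
    have "u s < u (s + T)"
      using DERIV_pos_imp_increasing[of s "s + T" u] T du posx by force
    then show False using per by simp
  qed
qed

end
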